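(* Let $\phi:[0,1]\to[0,1]$ be concave, $\phi(0)=0$, $\phi(1)=1$, continuous at $0$, and suppose its right derivative $\phi'(0)$ at $0$ is finite. Then there exists a constant $K$ such that $\|X\|_{\Lambda_\phi}\le K\|X\|_{M_\phi}$ for all $X\in M_\phi$; consequently $\Lambda_\phi=M_\phi$ and all ri norms with fundamental function $\phi$ are equivalent. Moreover $K=1/\phi(1/\phi'(0))$ is a feasible constant.
   Context: $\Omega=[0,1]$ with Lebesgue measure $\mu$. $X^*(\omega)=\inf\{\lambda\ge0:\mu\{|X|>\lambda\}\le\omega\}$. Lorentz norm $\|X\|_{\Lambda_\phi}=\int_0^1X^*(\omega)\phi'(\omega)\,d\omega$ (for $\phi$ continuous at $0$); Marcinkiewicz norm $\|X\|_{M_\phi}=\sup_{0<t\le1}\frac{\phi(t)}{t}\int_0^tX^*\,d\omega$; $\Lambda_\phi$, $M_\phi$ denote the spaces of measurable $X$ for which these norms are finite. An ri norm is $X\mapsto R(|X|)$ for a rearrangement invariant Banach function norm $R$ on nonnegative measurable functions (positive, homogeneous, subadditive, monotone, Fatou, $R(\chi_E)<\infty$, $\int_EX\le c_ER(X)$, $R(\chi_\Omega)=1$); its fundamental function is $t\mapsto R(\chi_E)$, $\mu(E)=t$. Two norms are equivalent if they define the same space and there are $c_1,c_2>0$ with $c_1\|X\|_1\le\|X\|_2\le c_2\|X\|_1$ on it. *)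

theory Defs
  imports "HOL-Analysis.Analysis"
begin

abbreviation Pm :: "real measure" where "Pm \<equiv> lebesgue_on {0..1}"

definition distf :: "(real \<Rightarrow> real) \<Rightarrow> real \<Rightarrow> real" where
  "distf X l = measure Pm {\<omega> \<in> space Pm. \<bar>X \<omega>\<bar> > l}"

text \<open>Decreasing rearrangement X*(w) = inf{l >= 0 : mu{|X|>l} <= w}, valued in [0,infinity]
  (the infimum of the empty set is infinity).\<close>
definition rearr :: "(real \<Rightarrow> real) \<Rightarrow> real \<Rightarrow> ennreal" where
  "rearr X \<omega> = (INF l \<in> {l. 0 \<le> l \<and> distf X l \<le> \<omega>}. ennreal l)"

definition rderiv :: "(real \<Rightarrow> real) \<Rightarrow> real \<Rightarrow> real" where
  "rderiv f t = Lim (at_right 0) (\<lambda>h. (f (t + h) - f t) / h)"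

definition lorentz_norm :: "(real \<Rightarrow> real) \<Rightarrow> (real \<Rightarrow> real) \<Rightarrow> ennreal" where
  "lorentz_norm \<phi> X = (\<integral>\<^sup>+ \<omega>. rearr X \<omega> * ennreal (rderiv \<phi> \<omega>) \<partial>Pm)"

definition marc_norm :: "(real \<Rightarrow> real) \<Rightarrow> (real \<Rightarrow> real) \<Rightarrow> ennreal" where
  "marc_norm \<phi> X = (SUP t \<in> {0<..1}. ennreal (\<phi> t / t) * (\<integral>\<^sup>+ \<omega>. rearr X \<omega> \<partial>lebesgue_on {0..t}))"

definition lorentz_space :: "(real \<Rightarrow> real) \<Rightarrow> (real \<Rightarrow> real) set" where
  "lorentz_space \<phi> = {X \<in> borel_measurable Pm. lorentz_norm \<phi> X < \<infinity>}"

definition marc_space :: "(real \<Rightarrow> real) \<Rightarrow> (real \<Rightarrow> real) set" where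
  "marc_space \<phi> = {X \<in> borel_measurable Pm. marc_norm \<phi> X < \<infinity>}"

definition nnmeas :: "(real \<Rightarrow> real) \<Rightarrow> bool" where
  "nnmeas X \<longleftrightarrow> X \<in> borel_measurable Pm \<and> (\<forall>\<omega>\<in>space Pm. 0 \<le> X \<omega>)"

text \<open>Rearrangement invariant Banach function norm R on nonnegative measurable functions.\<close>
definition ri_norm :: "((real \<Rightarrow> real) \<Rightarrow> ennreal) \<Rightarrow> bool" where
  "ri_norm R \<longleftrightarrow>
     (\<forall>X. nnmeas X \<longrightarrow> (R X = 0 \<longleftrightarrow> (AE \<omega> in Pm. X \<omega> = 0)))
   \<and> (\<forall>X a. nnmeas X \<longrightarrow> 0 \<le> a \<longrightarrow> R (\<lambda>\<omega>. a * X \<omega>) = ennreal a * R X)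
   \<and> (\<forall>X Y. nnmeas X \<longrightarrow> nnmeas Y \<longrightarrow> R (\<lambda>\<omega>. X \<omega> + Y \<omega>) \<le> R X + R Y)
   \<and> (\<forall>X Y. nnmeas X \<longrightarrow> nnmeas Y \<longrightarrow> (AE \<omega> in Pm. X \<omega> \<le> Y \<omega>) \<longrightarrow> R X \<le> R Y)
   \<and> (\<forall>Xs X. (\<forall>n. nnmeas (Xs n)) \<longrightarrow> nnmeas X \<longrightarrow>
        (AE \<omega> in Pm. incseq (\<lambda>n. Xs n \<omega>) \<and> (\<lambda>n. Xs n \<omega>) \<longlonglongrightarrow> X \<omega>) \<longrightarrow>
        (SUP n. R (Xs n)) = R X)
   \<and> (\<forall>E \<in> sets Pm. R (indicator E) < \<infinity>)
   \<and> (\<forall>E \<in> sets Pm. \<exists>c::real. \<forall>X. nnmeas X \<longrightarrow>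
        (\<integral>\<^sup>+ \<omega>\<in>E. ennreal (X \<omega>) \<partial>Pm) \<le> ennreal c * R X)
   \<and> R (\<lambda>_. 1) = 1
   \<and> (\<forall>X Y. nnmeas X \<longrightarrow> nnmeas Y \<longrightarrow>
        (\<forall>l. emeasure Pm {\<omega> \<in> space Pm. X \<omega> > l} = emeasure Pm {\<omega> \<in> space Pm. Y \<omega> > l})
        \<longrightarrow> R X = R Y)"

definition has_fundamental_function :: "((real \<Rightarrow> real) \<Rightarrow> ennreal) \<Rightarrow> (real \<Rightarrow> real) \<Rightarrow> bool" where
  "has_fundamental_function R \<phi> \<longleftrightarrow>
     (\<forall>E \<in> sets Pm. R (indicator E) = ennreal (\<phi> (measure Pm E)))"

definition ri_space :: "((real \<Rightarrow> real) \<Rightarrow> ennreal) \<Rightarrow> (real \<Rightarrow> real) set" where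
  "ri_space R = {X \<in> borel_measurable Pm. R (\<lambda>\<omega>. \<bar>X \<omega>\<bar>) < \<infinity>}"

definition ri_equiv :: "((real \<Rightarrow> real) \<Rightarrow> ennreal) \<Rightarrow> ((real \<Rightarrow> real) \<Rightarrow> ennreal) \<Rightarrow> bool" where
  "ri_equiv R1 R2 \<longleftrightarrow> ri_space R1 = ri_space R2 \<and>
     (\<exists>c1>0. \<exists>c2>0. \<forall>X \<in> ri_space R1.
        ennreal c1 * R1 (\<lambda>\<omega>. \<bar>X \<omega>\<bar>) \<le> R2 (\<lambda>\<omega>. \<bar>X \<omega>\<bar>) \<and>
        R2 (\<lambda>\<omega>. \<bar>X \<omega>\<bar>) \<le> ennreal c2 * R1 (\<lambda>\<omega>. \<bar>X \<omega>\<bar>))"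

end

theory Submission imports Defs begin

lemma slope3:
  fixes \<phi> :: "real \<Rightarrow> real"
  assumes cc: "concave_on {0..1} \<phi>" and "0 \<le> a" "a < b" "b < c" "c \<le> 1"
  shows "(\<phi> c - \<phi> a)/(c-a) \<le> (\<phi> b - \<phi> a)/(b-a)"
    and "(\<phi> c - \<phi> b)/(c - b) \<le> (\<phi> c - \<phi> a)/(c-a)"
proof -
  define t where "t = (b-a)/(c-a)"
  have t0: "0 \<le> t" "t \<le> 1" using assms by (auto simp: t_def field_simps)
  have "t * (c - a) = b - a" using assms by (simp add: t_def)
  hence bt: "(1 - t) *\<^sub>R a + t *\<^sub>R c = b" by (simp add: algebra_simps)
  have "\<phi> ((1 - t) *\<^sub>R a + t *\<^sub>R c) \<ge> (1 - t) * \<phi> a + t * \<phi> c"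
    by (rule concave_onD[OF cc t0]) (use assms in auto)
  hence H: "\<phi> b \<ge> (1 - t) * \<phi> a + t * \<phi> c" using bt by simp
  have ca: "c - a > 0" "b - a > 0" "c - b > 0" using assms by auto
  have H2: "(c-a) * \<phi> b \<ge> (c - b) * \<phi> a + (b-a) * \<phi> c"
  proof -
    have e1: "(c-a) * t = b - a" "(c-a)*(1-t) = c - b" using ca by (auto simp: t_def field_simps)
    have "(c-a) * \<phi> b \<ge> (c-a) * ((1 - t) * \<phi> a + t * \<phi> c)"
      using H ca by (simp add: mult_left_mono)
    also have "(c-a) * ((1 - t) * \<phi> a + t * \<phi> c) = ((c-a)*(1-t)) * \<phi> a + ((c-a) * t) * \<phi> c"
      by (simp add: algebra_simps)
    finally show ?thesis unfolding e1 .
  qed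
  show "(\<phi> c - \<phi> a)/(c-a) \<le> (\<phi> b - \<phi> a)/(b-a)"
    using H2 ca by (simp add: divide_simps) (simp add: algebra_simps)
  show "(\<phi> c - \<phi> b)/(c - b) \<le> (\<phi> c - \<phi> a)/(c-a)"
    using H2 ca by (simp add: divide_simps) (simp add: algebra_simps)
qed

definition Psi :: "(real \<Rightarrow> real) \<Rightarrow> real \<Rightarrow> ennreal" where
  "Psi f x = (if x < 1 then ennreal (rderiv f (max 0 x)) else 0)"

lemma anti_meas:
  fixes f :: "real \<Rightarrow> ennreal"
  assumes "\<And>x y. x \<le> y \<Longrightarrow> f y \<le> f x"
  shows "f \<in> borel_measurable borel"
proof (rule borel_measurableI_greater)
  fix y
  have "is_interval {x. y < f x}"
    unfolding is_interval_1 using assms order_less_le_trans by blast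
  then show "{x \<in> space borel. y < f x} \<in> sets borel"
    using real_interval_borel_measurable by simp
qed

lemma lebesgue_on_lborel:
  assumes "S \<in> sets borel"
  shows "(\<integral>\<^sup>+x. f x \<partial>lebesgue_on S) = (\<integral>\<^sup>+x. f x * indicator S x \<partial>lborel)"
  using assms by (simp add: nn_integral_restrict_space nn_integral_completion)

lemma emeasure_Ici_top: "emeasure lborel {(0::real)..} = top"
proof (rule ccontr)
  assume "emeasure lborel {(0::real)..} \<noteq> top"
  then obtain r where r: "emeasure lborel {(0::real)..} = ennreal r" "0 \<le> r"
    by (cases "emeasure lborel {(0::real)..}") auto
  have "emeasure lborel {0..r+1} \<le> emeasure lborel {(0::real)..}"
    by (rule emeasure_mono) auto
  then show False using r by simp
qed

lemma layer_repr:
  fixes v :: ennreal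
  shows "(\<integral>\<^sup>+l. indicator {l. 0 \<le> l \<and> ennreal l < v} l \<partial>lborel) = v"
proof (cases v)
  case (real r)
  have "{l. 0 \<le> l \<and> ennreal l < v} = {0..<r}" using real by (auto simp: ennreal_less_iff)
  then show ?thesis using real by simp
next
  case top
  have "{l. 0 \<le> l \<and> ennreal l < v} = {0..}" using top by auto
  then show ?thesis using top emeasure_Ici_top by simp
qed

lemma layer_inner:
  fixes f g :: "real \<Rightarrow> ennreal"
  assumes f_anti: "\<And>x y. x \<le> y \<Longrightarrow> f y \<le> f x"
    and H: "\<And>m. 0 \<le> m \<Longrightarrow> m \<le> 1 \<Longrightarrow> (\<integral>\<^sup>+x. g x * indicator {0..m} x \<partial>lborel) \<le> ennreal (c * min m t0)"
    and c0: "0 \<le> c" and t0: "0 < t0" "t0 \<le> 1"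
  shows "(\<integral>\<^sup>+x. indicator {x. 0 \<le> l \<and> ennreal l < f x} x * g x * indicator {0..1} x \<partial>lborel)
     \<le> (\<integral>\<^sup>+x. indicator {x. 0 \<le> l \<and> ennreal l < f x} x * ennreal c * indicator {0..t0} x \<partial>lborel)"
proof -
  define A where "A = {x. 0 \<le> l \<and> ennreal l < f x}"
  show ?thesis
  proof (cases "0 \<in> A")
    case False
    have "(\<integral>\<^sup>+x. indicator A x * g x * indicator {0..1} x \<partial>lborel) = (\<integral>\<^sup>+x. 0 \<partial>(lborel::real measure))"
    proof (rule nn_integral_cong)
      fix x
      show "indicator A x * g x * indicator {0..1} x = 0"
      proof (cases "0 \<le> x")
        case True
        hence "x \<notin> A" using False f_anti[OF True] unfolding A_def by (auto simp: order_less_le_trans)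
        then show ?thesis by simp
      qed simp
    qed
    then show ?thesis unfolding A_def by simp
  next
    case True
    hence l0: "0 \<le> l" unfolding A_def by simp
    define m where "m = Sup (A \<inter> {0..1})"
    have ne: "A \<inter> {0..1} \<noteq> {}" using True by auto
    have bdd: "bdd_above (A \<inter> {0..1})" by (auto intro: bdd_aboveI[of _ 1])
    have m0: "0 \<le> m" unfolding m_def using True bdd by (intro cSup_upper) auto
    have m1: "m \<le> 1" unfolding m_def using ne by (intro cSup_least) auto
    have upper: "x \<le> m" if "x \<in> A" "x \<in> {0..1}" for x
      unfolding m_def using that bdd by (intro cSup_upper) auto
    have lower: "x \<in> A" if lx: "0 \<le> x" "x < m" for x
    proof -
      obtain y where y: "y \<in> A \<inter> {0..1}" "x < y"
        using less_cSupE[OF lx(2)[unfolded m_def] ne] by blast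
      then show ?thesis using f_anti[of x y] lx unfolding A_def by (auto simp: order_less_le_trans)
    qed
    have "(\<integral>\<^sup>+x. indicator A x * g x * indicator {0..1} x \<partial>lborel) \<le> (\<integral>\<^sup>+x. g x * indicator {0..m} x \<partial>lborel)"
    proof (rule nn_integral_mono)
      fix x
      show "indicator A x * g x * indicator {0..1} x \<le> g x * indicator {0..m} x"
        using upper[of x] by (auto simp: indicator_def)
    qed
    also have "\<dots> \<le> ennreal (c * min m t0)" by (rule H[OF m0 m1])
    also have "\<dots> = (\<integral>\<^sup>+x. ennreal c * indicator {0..<min m t0} x \<partial>lborel)"
      using m0 t0 c0 by (simp add: nn_integral_cmult_indicator ennreal_mult)
    also have "\<dots> \<le> (\<integral>\<^sup>+x. indicator A x * ennreal c * indicator {0..t0} x \<partial>lborel)"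
    proof (rule nn_integral_mono)
      fix x
      show "ennreal c * indicator {0..<min m t0} x \<le> indicator A x * ennreal c * indicator {0..t0} x"
        using lower[of x] by (auto simp: indicator_def)
    qed
    finally show ?thesis unfolding A_def .
  qed
qed

lemma layer_cake_ineq:
  fixes f g :: "real \<Rightarrow> ennreal"
  assumes f_anti: "\<And>x y. x \<le> y \<Longrightarrow> f y \<le> f x"
    and g_meas: "g \<in> borel_measurable borel"
    and H: "\<And>m. 0 \<le> m \<Longrightarrow> m \<le> 1 \<Longrightarrow> (\<integral>\<^sup>+x. g x * indicator {0..m} x \<partial>lborel) \<le> ennreal (c * min m t0)"
    and c0: "0 \<le> c" and t0: "0 < t0" "t0 \<le> 1"
  shows "(\<integral>\<^sup>+x. f x * g x * indicator {0..1} x \<partial>lborel) \<le> ennreal c * (\<integral>\<^sup>+x. f x * indicator {0..t0} x \<partial>lborel)"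
proof -
  have fm[measurable]: "f \<in> borel_measurable borel" by (rule anti_meas) (rule f_anti)
  note [measurable] = g_meas
  define T where "T = (\<lambda>x l. indicator {x. 0 \<le> l \<and> ennreal l < f x} x :: ennreal)"
  have T_eq: "T x l = indicator {l. 0 \<le> l \<and> ennreal l < f x} l" for x l
    by (simp add: T_def indicator_def)
  have Tm: "(\<lambda>(x, l). T x l) \<in> borel_measurable (lborel \<Otimes>\<^sub>M lborel)"
    unfolding T_def by measurable
  have "(\<integral>\<^sup>+x. f x * g x * indicator {0..1} x \<partial>lborel)
      = (\<integral>\<^sup>+x. (\<integral>\<^sup>+l. T x l \<partial>lborel) * (g x * indicator {0..1} x) \<partial>lborel)"
    by (simp add: T_eq layer_repr mult.assoc)
  also have "\<dots> = (\<integral>\<^sup>+x. (\<integral>\<^sup>+l. T x l * (g x * indicator {0..1} x) \<partial>lborel) \<partial>lborel)"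
    by (rule nn_integral_cong, rule nn_integral_multc[symmetric]) (simp add: T_eq)
  also have "\<dots> = (\<integral>\<^sup>+l. (\<integral>\<^sup>+x. T x l * (g x * indicator {0..1} x) \<partial>lborel) \<partial>lborel)"
    by (rule lborel_pair.Fubini'[symmetric]) (use Tm in measurable)
  also have "\<dots> \<le> (\<integral>\<^sup>+l. (\<integral>\<^sup>+x. T x l * (ennreal c * indicator {0..t0} x) \<partial>lborel) \<partial>lborel)"
  proof (rule nn_integral_mono)
    fix l
    show "(\<integral>\<^sup>+x. T x l * (g x * indicator {0..1} x) \<partial>lborel) \<le> (\<integral>\<^sup>+x. T x l * (ennreal c * indicator {0..t0} x) \<partial>lborel)"
      using layer_inner[OF f_anti H c0 t0, where l=l] by (simp add: T_def mult.assoc)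
  qed
  also have "\<dots> = (\<integral>\<^sup>+x. (\<integral>\<^sup>+l. T x l * (ennreal c * indicator {0..t0} x) \<partial>lborel) \<partial>lborel)"
    by (rule lborel_pair.Fubini') (use Tm in measurable)
  also have "\<dots> = (\<integral>\<^sup>+x. (\<integral>\<^sup>+l. T x l \<partial>lborel) * (ennreal c * indicator {0..t0} x) \<partial>lborel)"
    by (rule nn_integral_cong, rule nn_integral_multc) (simp add: T_eq)
  also have "\<dots> = (\<integral>\<^sup>+x. ennreal c * (f x * indicator {0..t0} x) \<partial>lborel)"
    by (simp add: T_eq layer_repr mult.assoc mult.left_commute)
  also have "\<dots> = ennreal c * (\<integral>\<^sup>+x. f x * indicator {0..t0} x \<partial>lborel)"
    by (rule nn_integral_cmult) measurable
  finally show ?thesis .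
qed

lemma Pm_space: "space Pm = {0..1}" by simp

lemma Pm_fin: "finite_measure Pm"
  by (rule finite_measureI) (simp add: emeasure_restrict_space)

lemma Pm_measure_le1: "measure Pm E \<le> 1"
proof -
  interpret finite_measure Pm by (rule Pm_fin)
  have "measure Pm E \<le> measure Pm (space Pm)" by (rule bounded_measure)
  also have "\<dots> = 1" by (simp add: measure_restrict_space)
  finally show ?thesis .
qed

lemma ri_pos: "ri_norm R \<Longrightarrow> nnmeas X \<Longrightarrow> (R X = 0 \<longleftrightarrow> (AE \<omega> in Pm. X \<omega> = 0))"
  unfolding ri_norm_def by (elim conjE) blast
lemma ri_hom: "ri_norm R \<Longrightarrow> nnmeas X \<Longrightarrow> 0 \<le> a \<Longrightarrow> R (\<lambda>\<omega>. a * X \<omega>) = ennreal a * R X"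
  unfolding ri_norm_def by (elim conjE) blast
lemma ri_sub: "ri_norm R \<Longrightarrow> nnmeas X \<Longrightarrow> nnmeas Y \<Longrightarrow> R (\<lambda>\<omega>. X \<omega> + Y \<omega>) \<le> R X + R Y"
  unfolding ri_norm_def by (elim conjE) blast
lemma ri_mono: "ri_norm R \<Longrightarrow> nnmeas X \<Longrightarrow> nnmeas Y \<Longrightarrow> (AE \<omega> in Pm. X \<omega> \<le> Y \<omega>) \<Longrightarrow> R X \<le> R Y"
  unfolding ri_norm_def by (elim conjE) blast
lemma ri_fatou: "ri_norm R \<Longrightarrow> (\<And>n. nnmeas (Xs n)) \<Longrightarrow> nnmeas X \<Longrightarrow>
        (AE \<omega> in Pm. incseq (\<lambda>n. Xs n \<omega>) \<and> (\<lambda>n. Xs n \<omega>) \<longlonglongrightarrow> X \<omega>) \<Longrightarrow>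
        (SUP n. R (Xs n)) = R X"
  unfolding ri_norm_def by (elim conjE) blast
lemma ri_int: "ri_norm R \<Longrightarrow> E \<in> sets Pm \<Longrightarrow> \<exists>c::real. \<forall>X. nnmeas X \<longrightarrow>
        (\<integral>\<^sup>+ \<omega>\<in>E. ennreal (X \<omega>) \<partial>Pm) \<le> ennreal c * R X"
  unfolding ri_norm_def by (elim conjE) blast
lemma ri_zero: "ri_norm R \<Longrightarrow> R (\<lambda>_. 0) = 0"
  using ri_pos[of R "\<lambda>_. 0"] by (simp add: nnmeas_def)

lemma ri_sum:
  assumes R: "ri_norm R" and A: "finite A" and g: "\<And>a. a \<in> A \<Longrightarrow> nnmeas (g a)"
  shows "R (\<lambda>x. \<Sum>a\<in>A. g a x) \<le> (\<Sum>a\<in>A. R (g a))"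
  using A g
proof (induction A rule: finite_induct)
  case empty
  then show ?case using ri_zero[OF R] by simp
next
  case (insert b A)
  have nnA: "nnmeas (\<lambda>x. \<Sum>a\<in>A. g a x)"
    using insert.prems unfolding nnmeas_def by (auto intro!: sum_nonneg borel_measurable_sum)
  have nnb: "nnmeas (g b)" using insert.prems by simp
  have "R (\<lambda>x. \<Sum>a\<in>insert b A. g a x) = R (\<lambda>x. g b x + (\<Sum>a\<in>A. g a x))"
    using insert.hyps by simp
  also have "\<dots> \<le> R (g b) + R (\<lambda>x. \<Sum>a\<in>A. g a x)"
    using ri_sub[OF R nnb nnA] .
  also have "\<dots> \<le> R (g b) + (\<Sum>a\<in>A. R (g a))"
    using insert by (intro add_left_mono) auto
  finally show ?case using insert.hyps by simp
qed

lemma ri_simple: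
  assumes R: "ri_norm R" and F: "has_fundamental_function R \<phi>"
    and phid: "\<And>E. E \<in> sets Pm \<Longrightarrow> \<phi> (measure Pm E) \<le> d * measure Pm E"
    and sf: "simple_function Pm Y" and Ynn: "\<And>x. 0 \<le> Y x" and d0: "0 \<le> d"
  shows "R Y \<le> ennreal d * (\<integral>\<^sup>+x. ennreal (Y x) \<partial>Pm)"
proof -
  interpret finite_measure Pm by (rule Pm_fin)
  define V where "V = Y ` space Pm"
  define E where "E = (\<lambda>y. Y -` {y} \<inter> space Pm)"
  have finV: "finite V" using simple_functionD(1)[OF sf] by (simp add: V_def)
  have E_sets: "E y \<in> sets Pm" for y unfolding E_def by (rule simple_functionD(2)[OF sf])
  have V0: "0 \<le> y" if "y \<in> V" for y using that Ynn by (auto simp: V_def)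
  have Ymeas: "Y \<in> borel_measurable Pm" using sf by (rule borel_measurable_simple_function)
  have repr: "Y x = (\<Sum>y\<in>V. y * indicator (E y) x)" if "x \<in> space Pm" for x
    unfolding V_def E_def by (rule simple_function_indicator_representation_real[OF sf that Ynn])
  have nnE: "nnmeas (\<lambda>x. y * indicator (E y) x)" if "y \<in> V" for y
    unfolding nnmeas_def using E_sets V0[OF that] by (auto intro!: borel_measurable_indicator)
  have nnY: "nnmeas Y" unfolding nnmeas_def using Ymeas Ynn by auto
  have nnS: "nnmeas (\<lambda>x. \<Sum>y\<in>V. y * indicator (E y) x)"
    unfolding nnmeas_def using E_sets V0 by (auto intro!: sum_nonneg)
  have "R Y \<le> R (\<lambda>x. \<Sum>y\<in>V. y * indicator (E y) x)"
    using repr by (intro ri_mono[OF R nnY nnS] AE_I2) simp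
  also have "\<dots> \<le> (\<Sum>y\<in>V. R (\<lambda>x. y * indicator (E y) x))"
    by (rule ri_sum[OF R finV nnE])
  also have "\<dots> = (\<Sum>y\<in>V. ennreal y * ennreal (\<phi> (measure Pm (E y))))"
  proof (rule sum.cong)
    fix y assume y: "y \<in> V"
    have nn: "nnmeas (indicator (E y))" unfolding nnmeas_def using E_sets by auto
    have "R (\<lambda>x. y * indicator (E y) x) = ennreal y * R (indicator (E y))"
      using ri_hom[OF R nn V0[OF y]] .
    then show "R (\<lambda>x. y * indicator (E y) x) = ennreal y * ennreal (\<phi> (measure Pm (E y)))"
      using F E_sets unfolding has_fundamental_function_def by simp
  qed simp
  also have "\<dots> \<le> (\<Sum>y\<in>V. ennreal d * (ennreal y * emeasure Pm (E y)))"
  proof (rule sum_mono)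
    fix y assume y: "y \<in> V"
    have "ennreal y * ennreal (\<phi> (measure Pm (E y))) \<le> ennreal y * ennreal (d * measure Pm (E y))"
      by (intro mult_left_mono ennreal_leI phid E_sets) simp
    also have "\<dots> = ennreal d * (ennreal y * emeasure Pm (E y))"
    proof -
      have "ennreal (d * measure Pm (E y)) = ennreal d * ennreal (measure Pm (E y))"
        using d0 by (intro ennreal_mult) auto
      moreover have "emeasure Pm (E y) = ennreal (measure Pm (E y))" by (rule emeasure_eq_measure)
      ultimately show ?thesis by (simp add: mult.assoc mult.left_commute)
    qed
    finally show "ennreal y * ennreal (\<phi> (measure Pm (E y))) \<le> ennreal d * (ennreal y * emeasure Pm (E y))" .
  qed
  also have "\<dots> = ennreal d * (\<Sum>y\<in>V. ennreal y * emeasure Pm (E y))"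
    by (simp add: sum_distrib_left)
  also have "(\<Sum>y\<in>V. ennreal y * emeasure Pm (E y)) = (\<Sum>y\<in>V. (\<integral>\<^sup>+x. ennreal y * indicator (E y) x \<partial>Pm))"
    using E_sets by (simp add: nn_integral_cmult_indicator)
  also have "\<dots> = (\<integral>\<^sup>+x. (\<Sum>y\<in>V. ennreal y * indicator (E y) x) \<partial>Pm)"
    by (rule nn_integral_sum[symmetric]) (use E_sets in auto)
  also have "\<dots> = (\<integral>\<^sup>+x. ennreal (Y x) \<partial>Pm)"
  proof (rule nn_integral_cong)
    fix x assume x: "x \<in> space Pm"
    have "(\<Sum>y\<in>V. ennreal y * indicator (E y) x) = (\<Sum>y\<in>V. ennreal (y * indicator (E y) x))"
      using V0 by (intro sum.cong) (auto simp: indicator_def)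
    also have "\<dots> = ennreal (\<Sum>y\<in>V. y * indicator (E y) x)"
      using V0 by (intro sum_ennreal) auto
    finally show "(\<Sum>y\<in>V. ennreal y * indicator (E y) x) = ennreal (Y x)" using repr[OF x] by simp
  qed
  finally show ?thesis .
qed

lemma ri_upper:
  assumes R: "ri_norm R" and F: "has_fundamental_function R \<phi>"
    and phid: "\<And>E. E \<in> sets Pm \<Longrightarrow> \<phi> (measure Pm E) \<le> d * measure Pm E"
    and X: "nnmeas X" and d0: "0 \<le> d"
  shows "R X \<le> ennreal d * (\<integral>\<^sup>+x. ennreal (X x) \<partial>Pm)"
proof -
  have Xm: "X \<in> borel_measurable Pm" and X0: "\<And>x. x \<in> space Pm \<Longrightarrow> 0 \<le> X x"
    using X by (auto simp: nnmeas_def)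
  have um: "(\<lambda>x. ennreal (X x)) \<in> borel_measurable Pm" using Xm by measurable
  obtain f where sf: "\<And>i. simple_function Pm (f i)" and inc: "incseq f"
    and fin: "\<And>i x. f i x < top" and sup: "\<And>x. (SUP i. f i x) = ennreal (X x)"
    using borel_measurable_implies_simple_function_sequence'[OF um] by blast
  define Y where "Y = (\<lambda>i x. enn2real (f i x))"
  have fY: "f i x = ennreal (Y i x)" for i x using fin[of i x] by (simp add: Y_def)
  have sfY: "simple_function Pm (Y i)" for i
    using simple_function_compose[OF sf[of i], of enn2real] by (simp add: Y_def comp_def)
  have Y0: "0 \<le> Y i x" for i x by (simp add: Y_def)
  have nnY: "nnmeas (Y i)" for i
    unfolding nnmeas_def using borel_measurable_simple_function[OF sfY[of i]] Y0 by auto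
  have conv: "AE x in Pm. incseq (\<lambda>n. Y n x) \<and> (\<lambda>n. Y n x) \<longlonglongrightarrow> X x"
  proof (rule AE_I2, intro conjI)
    fix x assume x: "x \<in> space Pm"
    show "incseq (\<lambda>n. Y n x)"
    proof (rule incseq_SucI)
      fix n
      have "f n x \<le> f (Suc n) x" using inc by (simp add: incseq_Suc_iff le_fun_def)
      then show "Y n x \<le> Y (Suc n) x" using fY Y0 by (metis ennreal_le_iff)
    qed
    have "(\<lambda>n. f n x) \<longlonglongrightarrow> (SUP i. f i x)"
      by (rule LIMSEQ_SUP) (use inc in \<open>auto simp: incseq_def le_fun_def\<close>)
    hence "(\<lambda>n. f n x) \<longlonglongrightarrow> ennreal (X x)" using sup by simp
    hence "(\<lambda>n. enn2real (f n x)) \<longlonglongrightarrow> X x" using X0[OF x] by (rule tendsto_enn2real)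
    then show "(\<lambda>n. Y n x) \<longlonglongrightarrow> X x" by (simp add: Y_def)
  qed
  have RX: "(SUP n. R (Y n)) = R X"
    by (rule ri_fatou[OF R nnY X conv])
  have le: "R (Y n) \<le> ennreal d * (\<integral>\<^sup>+x. ennreal (X x) \<partial>Pm)" for n
  proof -
    have "R (Y n) \<le> ennreal d * (\<integral>\<^sup>+x. ennreal (Y n x) \<partial>Pm)"
      by (rule ri_simple[OF R F phid sfY Y0 d0])
    also have "(\<integral>\<^sup>+x. ennreal (Y n x) \<partial>Pm) \<le> (\<integral>\<^sup>+x. ennreal (X x) \<partial>Pm)"
    proof (rule nn_integral_mono)
      fix x
      have "ennreal (Y n x) = f n x" by (simp add: fY)
      also have "\<dots> \<le> (SUP i. f i x)" by (rule SUP_upper) simp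
      finally show "ennreal (Y n x) \<le> ennreal (X x)" using sup by simp
    qed
    finally show ?thesis by (simp add: mult_left_mono)
  qed
  have "(SUP n. R (Y n)) \<le> ennreal d * (\<integral>\<^sup>+x. ennreal (X x) \<partial>Pm)"
    by (rule SUP_least) (rule le)
  then show ?thesis using RX by simp
qed

lemma ri_lower:
  assumes R: "ri_norm R"
  shows "\<exists>c>0. \<forall>X. nnmeas X \<longrightarrow> (\<integral>\<^sup>+x. ennreal (X x) \<partial>Pm) \<le> ennreal c * R X"
proof -
  have "space Pm \<in> sets Pm" by simp
  then obtain c :: real where c: "\<And>X. nnmeas X \<Longrightarrow> (\<integral>\<^sup>+\<omega>\<in>space Pm. ennreal (X \<omega>) \<partial>Pm) \<le> ennreal c * R X"
    using ri_int[OF R \<open>space Pm \<in> sets Pm\<close>] by blast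
  show ?thesis
  proof (intro exI[of _ "max c 1"] conjI allI impI)
    fix X assume X: "nnmeas X"
    have "(\<integral>\<^sup>+x. ennreal (X x) \<partial>Pm) = (\<integral>\<^sup>+\<omega>\<in>space Pm. ennreal (X \<omega>) \<partial>Pm)"
      by (rule nn_integral_cong) simp
    also have "\<dots> \<le> ennreal c * R X" by (rule c[OF X])
    also have "\<dots> \<le> ennreal (max c 1) * R X" by (intro mult_right_mono ennreal_leI) auto
    finally show "(\<integral>\<^sup>+x. ennreal (X x) \<partial>Pm) \<le> ennreal (max c 1) * R X" .
  qed simp
qed

lemma rearr_anti: "x \<le> y \<Longrightarrow> rearr X y \<le> rearr X x"
  unfolding rearr_def by (rule INF_superset_mono) auto

lemma rearr_meas[measurable]: "rearr X \<in> borel_measurable borel"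
  by (rule anti_meas) (rule rearr_anti)

lemma marc_lower:
  assumes "0 < t" "t \<le> 1"
  shows "ennreal (\<phi> t / t) * (\<integral>\<^sup>+x. rearr X x \<partial>lebesgue_on {0..t}) \<le> marc_norm \<phi> X"
  unfolding marc_norm_def by (rule SUP_upper[where f="\<lambda>t. ennreal (\<phi> t / t) * (\<integral>\<^sup>+x. rearr X x \<partial>lebesgue_on {0..t})"]) (use assms in auto)

lemma rearr_finite:
  assumes Xm: "X \<in> borel_measurable Pm" and s: "0 < s"
  shows "rearr X s < top"
proof -
  interpret finite_measure Pm by (rule Pm_fin)
  define A where "A = (\<lambda>n::nat. {\<omega> \<in> space Pm. \<bar>X \<omega>\<bar> > real n})"
  have "A n \<in> sets Pm" for n unfolding A_def using Xm by measurable
  hence "range A \<subseteq> sets Pm" by auto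
  moreover have "decseq A" unfolding A_def decseq_def by auto
  ultimately have lim: "(\<lambda>n. measure Pm (A n)) \<longlonglongrightarrow> measure Pm (\<Inter>i. A i)"
    by (rule finite_Lim_measure_decseq)
  have "(\<Inter>i. A i) = {}"
  proof safe
    fix x assume "x \<in> (\<Inter>i. A i)"
    then have "\<bar>X x\<bar> > real (nat \<lceil>\<bar>X x\<bar>\<rceil>)" unfolding A_def by blast
    then show "x \<in> {}" by linarith
  qed
  with lim have "(\<lambda>n. measure Pm (A n)) \<longlonglongrightarrow> 0" by simp
  then have "eventually (\<lambda>n. measure Pm (A n) < s) sequentially"
    using s by (rule order_tendstoD(2))
  then obtain n where n: "measure Pm (A n) < s" by (auto simp: eventually_sequentially)
  have "distf X (real n) \<le> s" using n by (simp add: distf_def A_def)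
  hence "rearr X s \<le> ennreal (real n)" unfolding rearr_def by (intro INF_lower) auto
  also have "\<dots> < top" by simp
  finally show ?thesis .
qed

context
  fixes \<phi> :: "real \<Rightarrow> real" and d :: real
  assumes cc: "concave_on {0..1} \<phi>"
    and rng: "\<forall>t\<in>{0..1}. \<phi> t \<in> {0..1}"
    and p0: "\<phi> 0 = 0" and p1: "\<phi> 1 = 1"
    and der: "(\<phi> has_real_derivative d) (at_right 0)"
begin

lemma rd_tendsto:
  assumes "0 \<le> x" "x < 1"
  shows "\<exists>L. ((\<lambda>h. (\<phi> (x+h) - \<phi> x)/h) \<longlongrightarrow> L) (at_right 0)"
proof (cases "x = 0")
  case True
  have "((\<lambda>y. (\<phi> y - \<phi> 0) / (y - 0)) \<longlongrightarrow> d) (at_right 0)"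
    using der by (simp add: has_field_derivative_iff)
  then show ?thesis using True by auto
next
  case False
  hence x0: "0 < x" using assms by auto
  define r where "r = 1 - x"
  have r0: "r > 0" using assms by (simp add: r_def)
  define q where "q = (\<lambda>h. (\<phi> (x+h) - \<phi> x)/h)"
  define f where "f = (\<lambda>h. - q (min h r))"
  have mono: "f a \<le> f b" if "0 < a" "a \<le> b" for a b
  proof (cases "min a r = min b r")
    case True then show ?thesis by (simp add: f_def)
  next
    case False
    hence "min a r < min b r" using that by (auto simp: min_def split: if_splits)
    then show ?thesis unfolding f_def q_def
      using slope3(1)[OF cc, of x "x + min a r" "x + min b r"] that x0 r0
      by (simp add: r_def)
  qed
  have bnd: "- ((\<phi> x - \<phi> 0)/(x - 0)) \<le> f a" if "0 < a" for a
  proof -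
    have m: "0 < min a r" "x + min a r \<le> 1" using that r0 by (auto simp: r_def)
    have "q (min a r) \<le> (\<phi> (x + min a r) - \<phi> 0) / (x + min a r - 0)"
      unfolding q_def using slope3(2)[OF cc, of 0 x "x + min a r"] x0 m by simp
    also have "\<dots> \<le> (\<phi> x - \<phi> 0)/(x - 0)"
      using slope3(1)[OF cc, of 0 x "x + min a r"] x0 m by simp
    finally show ?thesis by (simp add: f_def)
  qed
  have "(f \<longlongrightarrow> Inf (f ` ({0<..} \<inter> UNIV))) (at 0 within ({0<..} \<inter> UNIV))"
    by (rule Lim_right_bound[where K="- ((\<phi> x - \<phi> 0)/(x - 0))"]) (use mono bnd in auto)
  hence "((\<lambda>h. - f h) \<longlongrightarrow> - Inf (f ` {0<..})) (at_right 0)"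
    by (intro tendsto_minus) simp
  moreover have "eventually (\<lambda>h. - f h = q h) (at_right 0)"
    using eventually_at_right_real[OF r0] by eventually_elim (auto simp: f_def)
  ultimately have "(q \<longlongrightarrow> - Inf (f ` {0<..})) (at_right 0)"
    using tendsto_cong by fastforce
  then show ?thesis unfolding q_def by blast
qed

lemma rd_ge:
  assumes "0 \<le> x" "x < z" "z \<le> 1"
  shows "(\<phi> z - \<phi> x)/(z-x) \<le> rderiv \<phi> x"
proof -
  obtain L where L: "((\<lambda>h. (\<phi> (x+h) - \<phi> x)/h) \<longlongrightarrow> L) (at_right 0)"
    using rd_tendsto assms by fastforce
  have "rderiv \<phi> x = L" unfolding rderiv_def by (rule tendsto_Lim[OF _ L]) simp
  moreover have "(\<phi> z - \<phi> x)/(z-x) \<le> L"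
  proof (rule tendsto_lowerbound[OF L _ trivial_limit_at_right_real])
    have zx: "0 < z - x" using assms by simp
    show "\<forall>\<^sub>F h in at_right 0. (\<phi> z - \<phi> x) / (z - x) \<le> (\<phi> (x + h) - \<phi> x) / h"
      using eventually_at_right_real[OF zx]
    proof eventually_elim
      case (elim h)
      show ?case
      proof (cases "h = z - x")
        case True then show ?thesis by simp
      next
        case False
        then show ?thesis using slope3(1)[OF cc, of x "x+h" z] elim assms by simp
      qed
    qed
  qed
  ultimately show ?thesis by simp
qed

lemma rd_le:
  assumes "0 \<le> y" "y < x" "x < 1"
  shows "rderiv \<phi> x \<le> (\<phi> x - \<phi> y)/(x-y)"
proof -
  obtain L where L: "((\<lambda>h. (\<phi> (x+h) - \<phi> x)/h) \<longlongrightarrow> L) (at_right 0)"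
    using rd_tendsto assms by fastforce
  have "rderiv \<phi> x = L" unfolding rderiv_def by (rule tendsto_Lim[OF _ L]) simp
  moreover have "L \<le> (\<phi> x - \<phi> y)/(x-y)"
  proof (rule tendsto_upperbound[OF L _ trivial_limit_at_right_real])
    have zx: "0 < 1 - x" using assms by simp
    show "\<forall>\<^sub>F h in at_right 0. (\<phi> x - \<phi> y)/(x-y) \<ge> (\<phi> (x + h) - \<phi> x) / h"
      using eventually_at_right_real[OF zx]
    proof eventually_elim
      case (elim h)
      have "(\<phi> (x + h) - \<phi> x) / h \<le> (\<phi> (x+h) - \<phi> y)/(x + h - y)"
        using slope3(2)[OF cc, of y x "x+h"] elim assms by simp
      also have "\<dots> \<le> (\<phi> x - \<phi> y)/(x-y)"
        using slope3(1)[OF cc, of y x "x+h"] elim assms by simp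
      finally show ?case .
    qed
  qed
  ultimately show ?thesis by simp
qed

lemma rd0: "rderiv \<phi> 0 = d"
proof -
  have "((\<lambda>y. (\<phi> y - \<phi> 0) / (y - 0)) \<longlongrightarrow> d) (at_right 0)"
    using der by (simp add: has_field_derivative_iff)
  hence "((\<lambda>h. (\<phi> (0+h) - \<phi> 0) / h) \<longlongrightarrow> d) (at_right 0)" by simp
  then show ?thesis unfolding rderiv_def by (intro tendsto_Lim) simp_all
qed

lemma phi_mono: assumes "0 \<le> x" "x \<le> y" "y \<le> 1" shows "\<phi> x \<le> \<phi> y"
proof (cases "x = y \<or> y = 1")
  case True then show ?thesis using rng assms p1 by auto
next
  case False
  hence "x < y" "y < 1" using assms by auto
  moreover have "\<phi> x \<le> 1" using rng assms by auto
  ultimately have "0 \<le> (\<phi> 1 - \<phi> x)/(1 - x)" using p1 by simp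
  also have "\<dots> \<le> (\<phi> y - \<phi> x)/(y - x)" using slope3(1)[OF cc, of x y 1] assms \<open>x<y\<close> \<open>y<1\<close> by simp
  finally show ?thesis using \<open>x<y\<close> by (simp add: divide_simps)
qed

lemma phi_le: assumes "0 \<le> t" "t \<le> 1" shows "\<phi> t \<le> d * t"
proof (cases "t = 0")
  case True then show ?thesis using p0 by simp
next
  case False
  hence "(\<phi> t - \<phi> 0)/(t - 0) \<le> d" using rd_ge[of 0 t] rd0 assms by simp
  then show ?thesis using False assms p0 by (simp add: divide_simps mult.commute)
qed

lemma d_ge1: "1 \<le> d" using phi_le[of 1] p1 by simp

lemma rd_nonneg: assumes "0 \<le> x" "x < 1" shows "0 \<le> rderiv \<phi> x"
proof -
  have "\<phi> x \<le> 1" using rng assms by auto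
  hence "0 \<le> (\<phi> 1 - \<phi> x)/(1 - x)" using p1 assms by simp
  also have "\<dots> \<le> rderiv \<phi> x" using rd_ge[of x 1] assms by simp
  finally show ?thesis .
qed

lemma rd_anti: assumes "0 \<le> x" "x \<le> y" "y < 1" shows "rderiv \<phi> y \<le> rderiv \<phi> x"
proof (cases "x = y")
  case False
  hence "x < y" using assms by simp
  have "rderiv \<phi> y \<le> (\<phi> y - \<phi> x)/(y - x)" using rd_le assms \<open>x<y\<close> by simp
  also have "\<dots> \<le> rderiv \<phi> x" using rd_ge assms \<open>x<y\<close> by simp
  finally show ?thesis .
qed simp

lemma rd_le_d: assumes "0 \<le> x" "x < 1" shows "rderiv \<phi> x \<le> d"
  using rd_anti[of 0 x] assms rd0 by simp

lemma Psi_anti: "x \<le> y \<Longrightarrow> Psi \<phi> y \<le> Psi \<phi> x"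
  unfolding Psi_def using rd_anti by (auto intro!: ennreal_leI)

lemma Psi_meas: "Psi \<phi> \<in> borel_measurable borel"
  by (rule anti_meas) (rule Psi_anti)

lemma riemann_sum:
  assumes "1 \<le> k" "k \<le> n" and h: "0 < h" "real n * h \<le> 1"
  shows "(\<Sum>i<k. rderiv \<phi> (real i * h) * h) \<le> d * h + \<phi> ((real k - 1) * h)"
  using assms(1,2)
proof (induction k rule: nat_induct_at_least)
  case base
  then show ?case using rd0 p0 by simp
next
  case (Suc k)
  have "rderiv \<phi> (real k * h) \<le> (\<phi> (real k * h) - \<phi> ((real k - 1) * h)) / (real k * h - (real k - 1) * h)"
  proof (rule rd_le)
    show "0 \<le> (real k - 1) * h" using Suc h by simp
    show "(real k - 1) * h < real k * h" using h by (simp add: algebra_simps)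
    have "real k < real n" using Suc by simp
    hence "real k * h < real n * h" using h by (intro mult_strict_right_mono) auto
    then show "real k * h < 1" using h by linarith
  qed
  hence "rderiv \<phi> (real k * h) * h \<le> \<phi> (real k * h) - \<phi> ((real k - 1) * h)"
    using h by (simp add: algebra_simps divide_simps)
  then show ?case using Suc by simp
qed

lemma Psi_int_eps:
  assumes "0 < m" "m \<le> 1" "1 \<le> n"
  shows "(\<integral>\<^sup>+x. Psi \<phi> x * indicator {0..m} x \<partial>lborel) \<le> ennreal (d * (m / real n) + \<phi> m)"
proof -
  define h where "h = m / real n"
  have h0: "0 < h" using assms by (simp add: h_def)
  have nh: "real n * h = m" using assms by (simp add: h_def)
  define r where "r = (\<lambda>i::nat. rderiv \<phi> (real i * h))"
  have r0: "0 \<le> r i" if "i < n" for i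
  proof -
    have "real i * h < real n * h" using that h0 by (intro mult_strict_right_mono) auto
    hence "real i * h < 1" using nh assms by linarith
    then show ?thesis unfolding r_def using rd_nonneg h0 by simp
  qed
  have pw: "Psi \<phi> x * indicator {0..m} x \<le> (\<Sum>i<n. ennreal (r i) * indicator {real i * h..<real (Suc i) * h} x) + ennreal d * indicator {m..m} x" for x
  proof (cases "0 \<le> x \<and> x < m")
    case True
    define i where "i = nat \<lfloor>x / h\<rfloor>"
    have fl: "real_of_int \<lfloor>x / h\<rfloor> \<le> x / h" "x / h < real_of_int \<lfloor>x / h\<rfloor> + 1" by linarith+
    have fl0: "0 \<le> \<lfloor>x / h\<rfloor>" using True h0 by simp
    have ri: "real i = real_of_int \<lfloor>x / h\<rfloor>" using fl0 by (simp add: i_def)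
    have lo: "real i * h \<le> x" using fl(1) h0 ri by (simp add: divide_simps)
    have "x / h < real i + 1" using fl(2) ri by simp
    hence "x < (real i + 1) * h" using h0 by (simp add: pos_divide_less_eq)
    hence hi: "x < real (Suc i) * h" by (simp add: add.commute)
    have "real i * h < real n * h" using lo True nh by simp
    hence iless: "i < n" using h0 by simp
    have "Psi \<phi> x \<le> Psi \<phi> (real i * h)" by (rule Psi_anti[OF lo])
    also have "Psi \<phi> (real i * h) = ennreal (r i)"
    proof -
      have "real i * h < 1" using lo True assms by simp
      moreover have "0 \<le> real i * h" using h0 by simp
      ultimately show ?thesis by (simp add: Psi_def r_def)
    qed
    also have "ennreal (r i) = ennreal (r i) * indicator {real i * h..<real (Suc i) * h} x"
      using lo hi by simp
    also have "\<dots> \<le> (\<Sum>i<n. ennreal (r i) * indicator {real i * h..<real (Suc i) * h} x)"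
      by (rule member_le_sum) (use iless in auto)
    finally show ?thesis using True by (simp add: add_increasing2)
  next
    case False
    show ?thesis
    proof (cases "x = m")
      case True
      have "Psi \<phi> x \<le> Psi \<phi> 0" using True assms by (intro Psi_anti) simp
      also have "Psi \<phi> 0 = ennreal d" by (simp add: Psi_def rd0)
      finally have "Psi \<phi> x * indicator {0..m} x \<le> ennreal d * indicator {m..m} x"
        using True assms by (simp add: indicator_def)
      then show ?thesis by (rule order_trans) (rule add_increasing, auto)
    next
      case F2: False
      then have "indicator {0..m} x = (0::ennreal)" using False by auto
      then show ?thesis by simp
    qed
  qed
  have "(\<integral>\<^sup>+x. Psi \<phi> x * indicator {0..m} x \<partial>lborel) \<le>
     (\<integral>\<^sup>+x. (\<Sum>i<n. ennreal (r i) * indicator {real i * h..<real (Suc i) * h} x) + ennreal d * indicator {m..m} x \<partial>lborel)"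
    by (rule nn_integral_mono) (rule pw)
  also have "\<dots> = (\<integral>\<^sup>+x. (\<Sum>i<n. ennreal (r i) * indicator {real i * h..<real (Suc i) * h} x) \<partial>lborel) + (\<integral>\<^sup>+x. ennreal d * indicator {m..m} x \<partial>lborel)"
    by (rule nn_integral_add; measurable)
  also have "(\<integral>\<^sup>+x. ennreal d * indicator {m..m} x \<partial>lborel) = 0"
    by (simp add: nn_integral_cmult_indicator del: atLeastAtMost_singleton)
  also have "(\<integral>\<^sup>+x. (\<Sum>i<n. ennreal (r i) * indicator {real i * h..<real (Suc i) * h} x) \<partial>lborel)
      = (\<Sum>i<n. (\<integral>\<^sup>+x. ennreal (r i) * indicator {real i * h..<real (Suc i) * h} x \<partial>lborel))"
    by (rule nn_integral_sum) auto
  also have "\<dots> = (\<Sum>i<n. ennreal (r i) * ennreal h)"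
  proof (rule sum.cong)
    fix i assume "i \<in> {..<n}"
    have le: "real i * h \<le> real (Suc i) * h" using h0 by simp
    have "real (Suc i) * h - real i * h = h" by (simp add: algebra_simps)
    then show "(\<integral>\<^sup>+x. ennreal (r i) * indicator {real i * h..<real (Suc i) * h} x \<partial>lborel) = ennreal (r i) * ennreal h"
      using le by (simp add: nn_integral_cmult_indicator)
  qed simp
  also have "(\<Sum>i<n. ennreal (r i) * ennreal h) + 0 = ennreal (\<Sum>i<n. r i * h)"
  proof -
    have "(\<Sum>i<n. ennreal (r i) * ennreal h) = (\<Sum>i<n. ennreal (r i * h))"
      using r0 h0 by (intro sum.cong) (auto simp: ennreal_mult)
    also have "\<dots> = ennreal (\<Sum>i<n. r i * h)"
      using r0 h0 by (intro sum_ennreal) auto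
    finally show ?thesis by simp
  qed
  also have "\<dots> \<le> ennreal (d * h + \<phi> m)"
  proof (rule ennreal_leI)
    have "(\<Sum>i<n. r i * h) \<le> d * h + \<phi> ((real n - 1) * h)"
      unfolding r_def by (rule riemann_sum) (use assms h0 nh in auto)
    also have "\<phi> ((real n - 1) * h) \<le> \<phi> m"
      using phi_mono[of "(real n - 1) * h" m] assms h0 nh by (simp add: algebra_simps)
    finally show "(\<Sum>i<n. r i * h) \<le> d * h + \<phi> m" by simp
  qed
  finally show ?thesis by (simp add: h_def)
qed

lemma Psi_int:
  assumes "0 \<le> m" "m \<le> 1"
  shows "(\<integral>\<^sup>+x. Psi \<phi> x * indicator {0..m} x \<partial>lborel) \<le> ennreal (\<phi> m)"
proof (cases "m = 0")
  case True
  have "(\<integral>\<^sup>+x. Psi \<phi> x * indicator {0..m} x \<partial>lborel) \<le> (\<integral>\<^sup>+x. ennreal d * indicator {0..(0::real)} x \<partial>lborel)"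
  proof (intro nn_integral_mono)
    fix x
    show "Psi \<phi> x * indicator {0..m} x \<le> ennreal d * indicator {0..(0::real)} x"
      by (auto simp: True Psi_def rd0 split: split_indicator)
  qed
  also have "\<dots> = 0" by (simp add: nn_integral_cmult_indicator)
  finally show ?thesis by simp
next
  case False
  hence m0: "0 < m" using assms by simp
  show ?thesis
  proof (rule ennreal_le_epsilon)
    fix e :: real assume e: "0 < e"
    define n where "n = nat \<lceil>d * m / e\<rceil> + 1"
    have n1: "1 \<le> n" by (simp add: n_def)
    have "d * m / e \<le> real n" unfolding n_def by linarith
    hence "d * m \<le> e * real n" using e by (simp add: divide_simps mult.commute)
    hence "d * (m / real n) \<le> e" using n1 by (simp add: divide_simps mult.commute)
    moreover have a0: "0 \<le> d*(m/real n)" using d_ge1 m0 by simp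
    moreover have b0: "0 \<le> \<phi> m" using rng assms by auto
    ultimately have le: "ennreal (d * (m / real n) + \<phi> m) \<le> ennreal (\<phi> m) + ennreal e"
      by (simp add: ennreal_plus add.commute add_mono ennreal_leI)
    show "(\<integral>\<^sup>+x. Psi \<phi> x * indicator {0..m} x \<partial>lborel) \<le> ennreal (\<phi> m) + ennreal e"
      using Psi_int_eps[OF m0 assms(2) n1] le by (rule order_trans)
  qed
qed

lemma phi_ge: assumes "0 \<le> t" "t \<le> 1" shows "t \<le> \<phi> t"
proof -
  have "\<phi> ((1 - t) *\<^sub>R 0 + t *\<^sub>R 1) \<ge> (1 - t) * \<phi> 0 + t * \<phi> 1"
    by (rule concave_onD[OF cc]) (use assms in auto)
  then show ?thesis using p0 p1 by simp
qed

lemma lorentz_lborel: "lorentz_norm \<phi> X = (\<integral>\<^sup>+\<omega>. rearr X \<omega> * ennreal (rderiv \<phi> \<omega>) * indicator {0..1} \<omega> \<partial>lborel)"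
  unfolding lorentz_norm_def by (rule lebesgue_on_lborel) simp

lemma lor_bound: "lorentz_norm \<phi> X \<le> ennreal d * (\<integral>\<^sup>+x. rearr X x \<partial>lebesgue_on {0..1/d})"
proof -
  have d1: "1 \<le> d" by (rule d_ge1)
  have "lorentz_norm \<phi> X \<le> (\<integral>\<^sup>+\<omega>. rearr X \<omega> * Psi \<phi> \<omega> * indicator {0..1} \<omega> \<partial>lborel)"
    unfolding lorentz_lborel
  proof (rule nn_integral_mono_AE)
    show "AE \<omega> in lborel. rearr X \<omega> * ennreal (rderiv \<phi> \<omega>) * indicator {0..1} \<omega> \<le> rearr X \<omega> * Psi \<phi> \<omega> * indicator {0..1} \<omega>"
      using AE_lborel_singleton[of "1::real"]
      by eventually_elim (auto simp: Psi_def indicator_def)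
  qed
  also have "\<dots> \<le> ennreal d * (\<integral>\<^sup>+x. rearr X x * indicator {0..1/d} x \<partial>lborel)"
  proof (rule layer_cake_ineq[OF rearr_anti Psi_meas])
    fix m :: real assume m: "0 \<le> m" "m \<le> 1"
    have "\<phi> m \<le> d * min m (1/d)"
    proof (cases "m \<le> 1/d")
      case True then show ?thesis using phi_le[OF m] by simp
    next
      case False then show ?thesis using rng m d1 by auto
    qed
    then show "(\<integral>\<^sup>+x. Psi \<phi> x * indicator {0..m} x \<partial>lborel) \<le> ennreal (d * min m (1/d))"
      using Psi_int[OF m] by (meson ennreal_leI order_trans)
  qed (use d1 in auto)
  also have "(\<integral>\<^sup>+x. rearr X x * indicator {0..1/d} x \<partial>lborel) = (\<integral>\<^sup>+x. rearr X x \<partial>lebesgue_on {0..1/d})"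
    by (rule lebesgue_on_lborel[symmetric]) simp
  finally show ?thesis .
qed

lemma main_ineq: "lorentz_norm \<phi> X \<le> ennreal (1 / \<phi> (1 / d)) * marc_norm \<phi> X"
proof -
  have d1: "1 \<le> d" by (rule d_ge1)
  define t0 where "t0 = 1/d"
  have t0: "0 < t0" "t0 \<le> 1" using d1 by (auto simp: t0_def)
  have pt: "t0 \<le> \<phi> t0" using phi_ge t0 by simp
  have pt0: "0 < \<phi> t0" using pt t0 by simp
  have eq: "ennreal d = ennreal (1 / \<phi> t0) * ennreal (\<phi> t0 / t0)"
  proof -
    have "(1 / \<phi> t0) * (\<phi> t0 / t0) = d" using pt0 t0 d1 by (simp add: t0_def)
    then show ?thesis using pt0 t0 by (metis ennreal_mult less_imp_le divide_nonneg_pos zero_less_one)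
  qed
  have "lorentz_norm \<phi> X \<le> ennreal d * (\<integral>\<^sup>+x. rearr X x \<partial>lebesgue_on {0..t0})"
    using lor_bound by (simp add: t0_def)
  also have "\<dots> = ennreal (1 / \<phi> t0) * (ennreal (\<phi> t0 / t0) * (\<integral>\<^sup>+x. rearr X x \<partial>lebesgue_on {0..t0}))"
    by (simp add: eq mult.assoc)
  also have "\<dots> \<le> ennreal (1 / \<phi> t0) * marc_norm \<phi> X"
    by (intro mult_left_mono marc_lower t0) simp
  finally show ?thesis by (simp add: t0_def)
qed

lemma marc_upper: "marc_norm \<phi> X \<le> ennreal d * (\<integral>\<^sup>+\<omega>. rearr X \<omega> * indicator {0..1} \<omega> \<partial>lborel)"
  unfolding marc_norm_def
proof (rule SUP_least)
  fix t :: real assume t: "t \<in> {0<..1}"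
  have "\<phi> t / t \<le> d" using phi_le[of t] t by (simp add: divide_simps mult.commute)
  hence a: "ennreal (\<phi> t / t) \<le> ennreal d" by (rule ennreal_leI)
  have "(\<integral>\<^sup>+x. rearr X x \<partial>lebesgue_on {0..t}) = (\<integral>\<^sup>+x. rearr X x * indicator {0..t} x \<partial>lborel)"
    by (rule lebesgue_on_lborel) simp
  also have "\<dots> \<le> (\<integral>\<^sup>+\<omega>. rearr X \<omega> * indicator {0..1} \<omega> \<partial>lborel)"
    by (rule nn_integral_mono) (use t in \<open>auto simp: indicator_def\<close>)
  finally show "ennreal (\<phi> t / t) * (\<integral>\<^sup>+x. rearr X x \<partial>lebesgue_on {0..t}) \<le> ennreal d * (\<integral>\<^sup>+\<omega>. rearr X \<omega> * indicator {0..1} \<omega> \<partial>lborel)"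
    using a by (intro mult_mono) auto
qed

lemma lor_lower:
  assumes s: "0 \<le> s" "s < 1"
  shows "ennreal (rderiv \<phi> s) * (\<integral>\<^sup>+\<omega>. rearr X \<omega> * indicator {0..s} \<omega> \<partial>lborel) \<le> lorentz_norm \<phi> X"
proof -
  have "ennreal (rderiv \<phi> s) * (\<integral>\<^sup>+\<omega>. rearr X \<omega> * indicator {0..s} \<omega> \<partial>lborel)
      = (\<integral>\<^sup>+\<omega>. ennreal (rderiv \<phi> s) * (rearr X \<omega> * indicator {0..s} \<omega>) \<partial>lborel)"
    by (rule nn_integral_cmult[symmetric]) measurable
  also have "\<dots> \<le> (\<integral>\<^sup>+\<omega>. rearr X \<omega> * ennreal (rderiv \<phi> \<omega>) * indicator {0..1} \<omega> \<partial>lborel)"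
  proof (rule nn_integral_mono)
    fix \<omega>
    show "ennreal (rderiv \<phi> s) * (rearr X \<omega> * indicator {0..s} \<omega>) \<le> rearr X \<omega> * ennreal (rderiv \<phi> \<omega>) * indicator {0..1} \<omega>"
    proof (cases "\<omega> \<in> {0..s}")
      case True
      hence "rderiv \<phi> s \<le> rderiv \<phi> \<omega>" using rd_anti s by auto
      hence "ennreal (rderiv \<phi> s) \<le> ennreal (rderiv \<phi> \<omega>)" by (rule ennreal_leI)
      then show ?thesis using True s by (simp add: mult.commute mult_left_mono)
    qed simp
  qed
  finally show ?thesis unfolding lorentz_lborel .
qed

lemma spaces_eq: "lorentz_space \<phi> = marc_space \<phi>"
proof (intro set_eqI iffI)
  fix X assume "X \<in> marc_space \<phi>"
  hence Xm: "X \<in> borel_measurable Pm" and M: "marc_norm \<phi> X < top" by (auto simp: marc_space_def)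
  have "lorentz_norm \<phi> X \<le> ennreal (1 / \<phi> (1 / d)) * marc_norm \<phi> X" by (rule main_ineq)
  also have "\<dots> < top" using M by (simp add: ennreal_mult_less_top)
  finally show "X \<in> lorentz_space \<phi>" using Xm by (simp add: lorentz_space_def)
next
  fix X assume "X \<in> lorentz_space \<phi>"
  hence Xm: "X \<in> borel_measurable Pm" and L: "lorentz_norm \<phi> X < top" by (auto simp: lorentz_space_def)
  have d1: "1 \<le> d" by (rule d_ge1)
  define s where "s = 1 / (2 * d)"
  have s: "0 < s" "s < 1" "s \<le> 1/2" using d1 by (auto simp: s_def field_simps)
  have "\<phi> s \<le> d * s" using phi_le s by simp
  also have "d * s = 1/2" using d1 by (simp add: s_def)
  finally have ps: "\<phi> s \<le> 1/2" .
  have "0 < (\<phi> 1 - \<phi> s) / (1 - s)" using ps s p1 by simp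
  also have "\<dots> \<le> rderiv \<phi> s" using rd_ge[of s 1] s by simp
  finally have rs: "0 < rderiv \<phi> s" .
  define I1 where "I1 = (\<integral>\<^sup>+\<omega>. rearr X \<omega> * indicator {0..s} \<omega> \<partial>lborel)"
  define I2 where "I2 = (\<integral>\<^sup>+\<omega>. rearr X \<omega> * indicator {s..1} \<omega> \<partial>lborel)"
  have "ennreal (rderiv \<phi> s) * I1 < top" unfolding I1_def
    using lor_lower[of s X] s L by (meson order_le_less_trans less_imp_le)
  hence I1f: "I1 < top" using rs by (auto simp: ennreal_mult_less_top)
  have "I2 \<le> (\<integral>\<^sup>+\<omega>. rearr X s * indicator {s..1} \<omega> \<partial>lborel)" unfolding I2_def
  proof (rule nn_integral_mono)
    fix \<omega> show "rearr X \<omega> * indicator {s..1} \<omega> \<le> rearr X s * indicator {s..1} \<omega>"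
      using rearr_anti[of s \<omega> X] by (auto simp: indicator_def)
  qed
  also have "\<dots> = rearr X s * ennreal (1 - s)" using s by (simp add: nn_integral_cmult_indicator)
  also have "\<dots> < top" using rearr_finite[OF Xm s(1)] by (simp add: ennreal_mult_less_top)
  finally have I2f: "I2 < top" .
  have "(\<integral>\<^sup>+\<omega>. rearr X \<omega> * indicator {0..1} \<omega> \<partial>lborel) \<le> (\<integral>\<^sup>+\<omega>. rearr X \<omega> * indicator {0..s} \<omega> + rearr X \<omega> * indicator {s..1} \<omega> \<partial>lborel)"
    by (rule nn_integral_mono) (auto simp: indicator_def)
  also have "\<dots> = I1 + I2" unfolding I1_def I2_def by (rule nn_integral_add) measurable
  also have "\<dots> < top" using I1f I2f by simp
  finally have "ennreal d * (\<integral>\<^sup>+\<omega>. rearr X \<omega> * indicator {0..1} \<omega> \<partial>lborel) < top"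
    by (simp add: ennreal_mult_less_top)
  with marc_upper[of X] have "marc_norm \<phi> X < top" by (rule order_le_less_trans)
  then show "X \<in> marc_space \<phi>" using Xm by (simp add: marc_space_def)
qed

end


lemma nnmeas_abs: "X \<in> borel_measurable Pm \<Longrightarrow> nnmeas (\<lambda>\<omega>. \<bar>X \<omega>\<bar>)"
  unfolding nnmeas_def by auto

lemma ri_space_eq:
  assumes R: "ri_norm R" and F: "has_fundamental_function R \<phi>"
    and phid: "\<And>E. E \<in> sets Pm \<Longrightarrow> \<phi> (measure Pm E) \<le> d * measure Pm E" and d0: "0 \<le> d"
  shows "ri_space R = {X \<in> borel_measurable Pm. (\<integral>\<^sup>+x. ennreal \<bar>X x\<bar> \<partial>Pm) < top}"
proof -
  obtain c where c: "c > 0" "\<And>X. nnmeas X \<Longrightarrow> (\<integral>\<^sup>+x. ennreal (X x) \<partial>Pm) \<le> ennreal c * R X"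
    using ri_lower[OF R] by blast
  show ?thesis
  proof (intro set_eqI iffI)
    fix X assume "X \<in> ri_space R"
    hence Xm: "X \<in> borel_measurable Pm" and RX: "R (\<lambda>\<omega>. \<bar>X \<omega>\<bar>) < top" by (auto simp: ri_space_def)
    have "(\<integral>\<^sup>+x. ennreal \<bar>X x\<bar> \<partial>Pm) \<le> ennreal c * R (\<lambda>\<omega>. \<bar>X \<omega>\<bar>)"
      using c(2)[OF nnmeas_abs[OF Xm]] by simp
    also have "\<dots> < top" using RX by (simp add: ennreal_mult_less_top)
    finally show "X \<in> {X \<in> borel_measurable Pm. (\<integral>\<^sup>+x. ennreal \<bar>X x\<bar> \<partial>Pm) < top}" using Xm by simp
  next
    fix X assume "X \<in> {X \<in> borel_measurable Pm. (\<integral>\<^sup>+x. ennreal \<bar>X x\<bar> \<partial>Pm) < top}"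
    hence Xm: "X \<in> borel_measurable Pm" and IX: "(\<integral>\<^sup>+x. ennreal \<bar>X x\<bar> \<partial>Pm) < top" by auto
    have "R (\<lambda>\<omega>. \<bar>X \<omega>\<bar>) \<le> ennreal d * (\<integral>\<^sup>+x. ennreal \<bar>X x\<bar> \<partial>Pm)"
      by (rule ri_upper[OF R F phid nnmeas_abs[OF Xm] d0])
    also have "\<dots> < top" using IX by (simp add: ennreal_mult_less_top)
    finally show "X \<in> ri_space R" using Xm by (simp add: ri_space_def)
  qed
qed

lemma ri_equiv_all:
  assumes R1: "ri_norm R1" and F1: "has_fundamental_function R1 \<phi>"
    and R2: "ri_norm R2" and F2: "has_fundamental_function R2 \<phi>"
    and phid: "\<And>E. E \<in> sets Pm \<Longrightarrow> \<phi> (measure Pm E) \<le> d * measure Pm E" and d0: "0 < d"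
  shows "ri_equiv R1 R2"
proof -
  obtain c1 where c1: "c1 > 0" "\<And>X. nnmeas X \<Longrightarrow> (\<integral>\<^sup>+x. ennreal (X x) \<partial>Pm) \<le> ennreal c1 * R1 X"
    using ri_lower[OF R1] by blast
  obtain c2 where c2: "c2 > 0" "\<And>X. nnmeas X \<Longrightarrow> (\<integral>\<^sup>+x. ennreal (X x) \<partial>Pm) \<le> ennreal c2 * R2 X"
    using ri_lower[OF R2] by blast
  have sp: "ri_space R1 = ri_space R2"
    using ri_space_eq[OF R1 F1 phid] ri_space_eq[OF R2 F2 phid] d0 by simp
  have ineq: "ennreal (1 / (c2 * d)) * R1 (\<lambda>\<omega>. \<bar>X \<omega>\<bar>) \<le> R2 (\<lambda>\<omega>. \<bar>X \<omega>\<bar>) \<and>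
        R2 (\<lambda>\<omega>. \<bar>X \<omega>\<bar>) \<le> ennreal (c1 * d) * R1 (\<lambda>\<omega>. \<bar>X \<omega>\<bar>)" if X: "X \<in> ri_space R1" for X
  proof
    have Xm: "X \<in> borel_measurable Pm" using X by (simp add: ri_space_def)
    define I where "I = (\<integral>\<^sup>+x. ennreal \<bar>X x\<bar> \<partial>Pm)"
    have u1: "R1 (\<lambda>\<omega>. \<bar>X \<omega>\<bar>) \<le> ennreal d * I" unfolding I_def
      using ri_upper[OF R1 F1 phid nnmeas_abs[OF Xm]] d0 by simp
    have u2: "R2 (\<lambda>\<omega>. \<bar>X \<omega>\<bar>) \<le> ennreal d * I" unfolding I_def
      using ri_upper[OF R2 F2 phid nnmeas_abs[OF Xm]] d0 by simp
    have l1: "I \<le> ennreal c1 * R1 (\<lambda>\<omega>. \<bar>X \<omega>\<bar>)" unfolding I_def using c1(2)[OF nnmeas_abs[OF Xm]] by simp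
    have l2: "I \<le> ennreal c2 * R2 (\<lambda>\<omega>. \<bar>X \<omega>\<bar>)" unfolding I_def using c2(2)[OF nnmeas_abs[OF Xm]] by simp
    have "ennreal (1 / (c2 * d)) * R1 (\<lambda>\<omega>. \<bar>X \<omega>\<bar>) \<le> ennreal (1 / (c2 * d)) * (ennreal d * (ennreal c2 * R2 (\<lambda>\<omega>. \<bar>X \<omega>\<bar>)))"
      using order_trans[OF u1 mult_left_mono[OF l2]] by (intro mult_left_mono) auto
    also have "\<dots> = (ennreal (1 / (c2 * d)) * ennreal d * ennreal c2) * R2 (\<lambda>\<omega>. \<bar>X \<omega>\<bar>)"
      by (simp only: mult.assoc)
    also have "ennreal (1 / (c2 * d)) * ennreal d * ennreal c2 = 1"
    proof -
      have a: "ennreal (1 / (c2 * d) * d) = ennreal (1 / (c2 * d)) * ennreal d"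
        by (rule ennreal_mult') (use c2 d0 in simp)
      have b: "ennreal (1 / (c2 * d) * d * c2) = ennreal (1 / (c2 * d) * d) * ennreal c2"
        by (rule ennreal_mult') (use c2 d0 in simp)
      have "1 / (c2 * d) * d * c2 = 1" using c2 d0 by simp
      then show ?thesis using a b by simp
    qed
    finally show "ennreal (1 / (c2 * d)) * R1 (\<lambda>\<omega>. \<bar>X \<omega>\<bar>) \<le> R2 (\<lambda>\<omega>. \<bar>X \<omega>\<bar>)" by simp
    have "R2 (\<lambda>\<omega>. \<bar>X \<omega>\<bar>) \<le> ennreal d * (ennreal c1 * R1 (\<lambda>\<omega>. \<bar>X \<omega>\<bar>))"
      using order_trans[OF u2 mult_left_mono[OF l1]] by simp
    also have "\<dots> = ennreal (c1 * d) * R1 (\<lambda>\<omega>. \<bar>X \<omega>\<bar>)"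
      using c1 d0 by (simp add: ennreal_mult mult.assoc mult.left_commute)
    finally show "R2 (\<lambda>\<omega>. \<bar>X \<omega>\<bar>) \<le> ennreal (c1 * d) * R1 (\<lambda>\<omega>. \<bar>X \<omega>\<bar>)" .
  qed
  have "1 / (c2 * d) > 0" "c1 * d > 0" using c1 c2 d0 by auto
  then show ?thesis unfolding ri_equiv_def using sp ineq by blast
qed

theorem theorem25:
  fixes \<phi> :: "real \<Rightarrow> real" and d :: real
  assumes "concave_on {0..1} \<phi>"
    and "\<forall>t\<in>{0..1}. \<phi> t \<in> {0..1}"
    and "\<phi> 0 = 0" and "\<phi> 1 = 1"
    and "continuous (at 0 within {0..1}) \<phi>"
    and "(\<phi> has_real_derivative d) (at_right 0)"
  shows "(\<exists>K::real. \<forall>X \<in> marc_space \<phi>. lorentz_norm \<phi> X \<le> ennreal K * marc_norm \<phi> X)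
       \<and> lorentz_space \<phi> = marc_space \<phi>
       \<and> (\<forall>R1 R2. ri_norm R1 \<and> ri_norm R2 \<and> has_fundamental_function R1 \<phi>
                  \<and> has_fundamental_function R2 \<phi> \<longrightarrow> ri_equiv R1 R2)
       \<and> (\<forall>X \<in> marc_space \<phi>. lorentz_norm \<phi> X \<le> ennreal (1 / \<phi> (1 / d)) * marc_norm \<phi> X)"
proof -
  note A = assms(1,2,3,4,6)
  have mi: "\<forall>X \<in> marc_space \<phi>. lorentz_norm \<phi> X \<le> ennreal (1 / \<phi> (1 / d)) * marc_norm \<phi> X"
    using main_ineq[OF A] by blast
  have d1: "1 \<le> d" by (rule d_ge1[OF A])
  have phid: "\<phi> (measure Pm E) \<le> d * measure Pm E" if "E \<in> sets Pm" for E
    using phi_le[OF A, of "measure Pm E"] Pm_measure_le1[of E] by simp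
  have ri: "\<forall>R1 R2. ri_norm R1 \<and> ri_norm R2 \<and> has_fundamental_function R1 \<phi>
                  \<and> has_fundamental_function R2 \<phi> \<longrightarrow> ri_equiv R1 R2"
    using ri_equiv_all[OF _ _ _ _ phid] d1 by auto
  show ?thesis using mi spaces_eq[OF A] ri by blast
qed

end
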